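(* Let $\lambda_1\ge\dots\ge\lambda_p\ge0$, $\gamma\ge0$, $r\in\{1,\dots,p\}$ and $i\in\{1,\dots,p\}$. Let $M,\Gamma\in\mathbb{R}^p$ with $\max_j|\Gamma_j|\le\gamma$ and put $T=M+\Gamma$. If $T\in H_r$ and $|T_i|>\lambda_r$, then $M^{(i)}\in H_r^{\gamma}$.
   Context: For $w$ (possibly with entries in $\mathbb{R}\cup\{\infty\}$), $|w|_{(1)}\ge\dots\ge|w|_{(p)}$ denote the ordered absolute values of its entries. $M^{(i)}$ is the vector with $M^{(i)}_j=M_j$ for $j\neq i$ and $M^{(i)}_i=\infty$. $$H_r=\Big\{w:\ \forall_{j\le r}\ \sum_{l=j}^r\lambda_l<\sum_{l=j}^r|w|_{(l)}\ \text{ and }\ \forall_{j\ge r+1}\ \sum_{l=r+1}^j\lambda_l\ge\sum_{l=r+1}^j|w|_{(l)}\Big\},$$ $$H_r^{\gamma}=\Big\{w:\ \forall_{j\le r}\ \sum_{l=j}^r(\lambda_l-\gamma)<\sum_{l=j}^r|w|_{(l)}\ \text{ and }\ \forall_{j\ge r+1}\ \sum_{l=r+1}^j(\lambda_l+\gamma)\ge\sum_{l=r+1}^j|w|_{(l)}\Big\}.$$ *)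

theory Defs
  imports "HOL-Analysis.Analysis" "HOL-Library.Extended_Real"
begin

text \<open>Vectors in R^p (or with entries in R \<union> {\<infinity>}) are functions on indices 1..p.
  ord_abs p w l is the l-th largest absolute value |w|_(l) among |w_1|,...,|w_p| (1 \<le> l \<le> p).\<close>

definition ord_abs :: "nat \<Rightarrow> (nat \<Rightarrow> ereal) \<Rightarrow> nat \<Rightarrow> ereal" where
  "ord_abs p w l = rev (sort (map (\<lambda>j. \<bar>w j\<bar>) [1..<p+1])) ! (l - 1)"

definition H :: "nat \<Rightarrow> (nat \<Rightarrow> real) \<Rightarrow> nat \<Rightarrow> (nat \<Rightarrow> ereal) set" where
  "H p lam r = {w.
     (\<forall>j\<in>{1..r}. (\<Sum>l=j..r. ereal (lam l)) < (\<Sum>l=j..r. ord_abs p w l)) \<and>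
     (\<forall>j\<in>{r+1..p}. (\<Sum>l=r+1..j. ereal (lam l)) \<ge> (\<Sum>l=r+1..j. ord_abs p w l))}"

definition H_gamma :: "nat \<Rightarrow> (nat \<Rightarrow> real) \<Rightarrow> nat \<Rightarrow> real \<Rightarrow> (nat \<Rightarrow> ereal) set" where
  "H_gamma p lam r \<gamma> = {w.
     (\<forall>j\<in>{1..r}. (\<Sum>l=j..r. ereal (lam l - \<gamma>)) < (\<Sum>l=j..r. ord_abs p w l)) \<and>
     (\<forall>j\<in>{r+1..p}. (\<Sum>l=r+1..j. ereal (lam l + \<gamma>)) \<ge> (\<Sum>l=r+1..j. ord_abs p w l))}"

definition inf_at :: "(nat \<Rightarrow> real) \<Rightarrow> nat \<Rightarrow> nat \<Rightarrow> ereal" where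
  "inf_at M i = (\<lambda>j. if j = i then \<infinity> else ereal (M j))"

end

theory Submission
  imports Defs
begin

lemma sorted_desc_count:
  fixes xs :: "'a::linorder list"
  assumes s: "sorted_wrt (\<ge>) xs" and P: "\<And>a b. P a \<Longrightarrow> a \<le> b \<Longrightarrow> P b" and l: "l < length xs"
  shows "P (xs!l) \<longleftrightarrow> Suc l \<le> length (filter P xs)"
proof -
  have eq: "length (filter P xs) = card {k. k < length xs \<and> P (xs ! k)}"
    by (rule length_filter_conv_card)
  show ?thesis
  proof
    assume "P (xs!l)"
    have "{..l} \<subseteq> {k. k < length xs \<and> P (xs ! k)}"
    proof
      fix k assume "k \<in> {..l}"
      then have kl: "k \<le> l" by simp
      have "xs!l \<le> xs!k"
      proof (cases "k = l")
        case False with kl have "k < l" by simp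
        then show ?thesis using sorted_wrt_nth_less[OF s _ l] by simp
      qed simp
      then show "k \<in> {k. k < length xs \<and> P (xs ! k)}" using P \<open>P (xs!l)\<close> kl l by auto
    qed
    from card_mono[OF _ this] show "Suc l \<le> length (filter P xs)" using eq by simp
  next
    assume c: "Suc l \<le> length (filter P xs)"
    show "P (xs!l)"
    proof (rule ccontr)
      assume n: "\<not> P (xs!l)"
      have "{k. k < length xs \<and> P (xs ! k)} \<subseteq> {..<l}"
      proof
        fix k assume k: "k \<in> {k. k < length xs \<and> P (xs ! k)}"
        show "k \<in> {..<l}"
        proof (rule ccontr)
          assume "k \<notin> {..<l}"
          then have "l \<le> k" by simp
          have "xs!k \<le> xs!l"
          proof (cases "k = l")
            case False with \<open>l \<le> k\<close> have lk: "l < k" by simp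
            show ?thesis using sorted_wrt_nth_less[OF s lk] k by simp
          qed simp
          then show False using P k n by blast
        qed
      qed
      from card_mono[OF _ this] have "card {k. k < length xs \<and> P (xs ! k)} \<le> l" by simp
      then show False using c eq by simp
    qed
  qed
qed

lemma ord_abs_char:
  assumes "1 \<le> l" "l \<le> p" and P: "\<And>a b. P a \<Longrightarrow> a \<le> b \<Longrightarrow> P b"
  shows "P (ord_abs p w l) \<longleftrightarrow> l \<le> card {j\<in>{1..p}. P \<bar>w j\<bar>}"
proof -
  let ?ys = "map (\<lambda>j. \<bar>w j\<bar>) [1..<p+1]"
  have s: "sorted_wrt (\<ge>) (rev (sort ?ys))"
    by (simp add: sorted_wrt_rev)
  have len: "length (rev (sort ?ys)) = p" by simp
  have f1: "length (filter P (rev (sort ?ys))) = length (filter P ?ys)"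
    by (metis length_rev mset_filter mset_sort rev_filter size_mset)
  have f2: "length (filter P ?ys) = card {j\<in>{1..p}. P \<bar>w j\<bar>}"
  proof -
    have "length (filter P ?ys) = length (filter (\<lambda>j. P \<bar>w j\<bar>) [1..<p+1])"
      by (simp add: filter_map o_def)
    also have "\<dots> = card (set (filter (\<lambda>j. P \<bar>w j\<bar>) [1..<p+1]))"
      by (metis distinct_card distinct_filter distinct_upt)
    also have "set (filter (\<lambda>j. P \<bar>w j\<bar>) [1..<p+1]) = {j\<in>{1..p}. P \<bar>w j\<bar>}"
      by auto
    finally show ?thesis .
  qed
  have "P (ord_abs p w l) \<longleftrightarrow> Suc (l-1) \<le> length (filter P (rev (sort ?ys)))"
    unfolding ord_abs_def
    by (rule sorted_desc_count[OF s P]) (use assms in auto)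
  then show ?thesis using f1 f2 assms by simp
qed

lemma ord_abs_mem:
  assumes "1 \<le> l" "l \<le> p"
  shows "ord_abs p w l \<in> (\<lambda>j. \<bar>w j\<bar>) ` {1..p}"
proof -
  have "rev (sort (map (\<lambda>j. \<bar>w j\<bar>) [1..<p+1])) ! (l - 1) \<in> set (rev (sort (map (\<lambda>j. \<bar>w j\<bar>) [1..<p+1])))"
    by (rule nth_mem) (use assms in simp)
  then show ?thesis unfolding ord_abs_def by auto
qed

theorem lemma2:
  fixes p r i :: nat and lam M \<Gamma> T :: "nat \<Rightarrow> real" and \<gamma> :: real
  assumes lam_mono: "\<And>a b. 1 \<le> a \<Longrightarrow> a \<le> b \<Longrightarrow> b \<le> p \<Longrightarrow> lam b \<le> lam a"
    and lam_nonneg: "\<And>a. 1 \<le> a \<Longrightarrow> a \<le> p \<Longrightarrow> 0 \<le> lam a"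
    and gamma_nonneg: "0 \<le> \<gamma>"
    and r: "r \<in> {1..p}" and i: "i \<in> {1..p}"
    and Gamma_bd: "\<And>j. j \<in> {1..p} \<Longrightarrow> \<bar>\<Gamma> j\<bar> \<le> \<gamma>"
    and T_def: "\<And>j. T j = M j + \<Gamma> j"
    and T_H: "(\<lambda>j. ereal (T j)) \<in> H p lam r"
    and T_big: "\<bar>T i\<bar> > lam r"
  shows "inf_at M i \<in> H_gamma p lam r \<gamma>"
proof -
  define T' where "T' = (\<lambda>j. ereal (T j))"
  define w where "w = inf_at M i"
  define t where "t = (\<lambda>l. real_of_ereal (ord_abs p T' l))"
  have tT: "ord_abs p T' l = ereal (t l)" if "1 \<le> l" "l \<le> p" for l
  proof -
    from ord_abs_mem[OF that, of T'] obtain j where "ord_abs p T' l = \<bar>T' j\<bar>" by auto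
    then show ?thesis unfolding t_def T'_def by simp
  qed
  have H1: "\<And>j. j \<in> {1..r} \<Longrightarrow> (\<Sum>l=j..r. lam l) < (\<Sum>l=j..r. t l)"
  proof -
    fix j assume j: "j \<in> {1..r}"
    with T_H have "(\<Sum>l=j..r. ereal (lam l)) < (\<Sum>l=j..r. ord_abs p T' l)"
      unfolding H_def T'_def by auto
    also have "(\<Sum>l=j..r. ord_abs p T' l) = (\<Sum>l=j..r. ereal (t l))"
      by (rule sum.cong) (use j r tT in auto)
    finally show "(\<Sum>l=j..r. lam l) < (\<Sum>l=j..r. t l)" by (simp add: sum_ereal)
  qed
  have H2: "\<And>j. j \<in> {r+1..p} \<Longrightarrow> (\<Sum>l=r+1..j. t l) \<le> (\<Sum>l=r+1..j. lam l)"
  proof -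
    fix j assume j: "j \<in> {r+1..p}"
    with T_H have "(\<Sum>l=r+1..j. ord_abs p T' l) \<le> (\<Sum>l=r+1..j. ereal (lam l))"
      unfolding H_def T'_def by auto
    also have "(\<Sum>l=r+1..j. ord_abs p T' l) = (\<Sum>l=r+1..j. ereal (t l))"
      by (rule sum.cong) (use j r tT in auto)
    finally show "(\<Sum>l=r+1..j. t l) \<le> (\<Sum>l=r+1..j. lam l)" by (simp add: sum_ereal)
  qed
  have Mbd: "\<bar>T j\<bar> - \<gamma> \<le> \<bar>M j\<bar> \<and> \<bar>M j\<bar> \<le> \<bar>T j\<bar> + \<gamma>" if "j \<in> {1..p}" for j
    using Gamma_bd[OF that] T_def[of j] by auto
  have wi: "w i = \<infinity>" and wj: "\<And>j. j \<noteq> i \<Longrightarrow> w j = ereal (M j)"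
    unfolding w_def inf_at_def by auto
  have low: "ereal (t l - \<gamma>) \<le> ord_abs p w l" if l: "1 \<le> l" "l \<le> p" for l
  proof -
    have "l \<le> card {j\<in>{1..p}. ereal (t l) \<le> \<bar>T' j\<bar>}"
      using ord_abs_char[OF l, of "\<lambda>x. ereal (t l) \<le> x" T'] tT[OF l] by auto
    also have "\<dots> \<le> card {j\<in>{1..p}. ereal (t l - \<gamma>) \<le> \<bar>w j\<bar>}"
    proof (rule card_mono)
      show "{j \<in> {1..p}. ereal (t l) \<le> \<bar>T' j\<bar>} \<subseteq> {j \<in> {1..p}. ereal (t l - \<gamma>) \<le> \<bar>w j\<bar>}"
      proof safe
        fix j assume j: "j \<in> {1..p}" and h: "ereal (t l) \<le> \<bar>T' j\<bar>"
        show "ereal (t l - \<gamma>) \<le> \<bar>w j\<bar>"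
        proof (cases "j = i")
          case True then show ?thesis using wi by simp
        next
          case False
          then show ?thesis using wj[OF False] h Mbd[OF j] unfolding T'_def by simp
        qed
      qed
    qed simp
    finally show ?thesis
      using ord_abs_char[OF l, of "\<lambda>x. ereal (t l - \<gamma>) \<le> x" w] by auto
  qed
  have tmono: "t l \<le> t (r+1)" if l: "r+1 \<le> l" "l \<le> p" for l
  proof -
    have l1: "1 \<le> l" using l by simp
    have "l \<le> card {j\<in>{1..p}. ereal (t l) \<le> \<bar>T' j\<bar>}"
      using ord_abs_char[OF l1 l(2), of "\<lambda>x. ereal (t l) \<le> x" T'] tT[OF l1 l(2)] by auto
    then have "r+1 \<le> card {j\<in>{1..p}. ereal (t l) \<le> \<bar>T' j\<bar>}" using l by simp
    then have "ereal (t l) \<le> ord_abs p T' (r+1)"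
      using ord_abs_char[of "r+1" p "\<lambda>x. ereal (t l) \<le> x" T'] l by auto
    then show ?thesis using tT[of "r+1"] l by simp
  qed
  have up: "ord_abs p w l \<le> ereal (t l + \<gamma>)" if l: "r+1 \<le> l" "l \<le> p" for l
  proof (rule ccontr)
    have l1: "1 \<le> l" using l by simp
    assume "\<not> ord_abs p w l \<le> ereal (t l + \<gamma>)"
    then have "ereal (t l + \<gamma>) < ord_abs p w l" by simp
    then have "l \<le> card {j\<in>{1..p}. ereal (t l + \<gamma>) < \<bar>w j\<bar>}"
      using ord_abs_char[OF l1 l(2), of "\<lambda>x. ereal (t l + \<gamma>) < x" w] by auto
    also have "\<dots> \<le> card {j\<in>{1..p}. ereal (t l) < \<bar>T' j\<bar>}"
    proof (rule card_mono)
      show "{j \<in> {1..p}. ereal (t l + \<gamma>) < \<bar>w j\<bar>} \<subseteq> {j \<in> {1..p}. ereal (t l) < \<bar>T' j\<bar>}"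
      proof safe
        fix j assume j: "j \<in> {1..p}" and h: "ereal (t l + \<gamma>) < \<bar>w j\<bar>"
        show "ereal (t l) < \<bar>T' j\<bar>"
        proof (cases "j = i")
          case True
          have "t (r+1) \<le> lam (r+1)" using H2[of "r+1"] l by simp
          moreover have "lam (r+1) \<le> lam r" using lam_mono[of r "r+1"] r l by simp
          ultimately show ?thesis using True T_big tmono[OF l] unfolding T'_def by simp
        next
          case False
          then show ?thesis using wj[OF False] h Mbd[OF j] unfolding T'_def by simp
        qed
      qed
    qed simp
    finally have "ereal (t l) < ord_abs p T' l"
      using ord_abs_char[OF l1 l(2), of "\<lambda>x. ereal (t l) < x" T'] by auto
    then show False using tT[OF l1 l(2)] by simp
  qed
  have C1: "(\<Sum>l=j..r. ereal (lam l - \<gamma>)) < (\<Sum>l=j..r. ord_abs p w l)" if j: "j \<in> {1..r}" for j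
  proof (cases "j = 1")
    case True
    have w1: "ord_abs p w 1 = \<infinity>"
    proof -
      have "1 \<le> card {j\<in>{1..p}. \<infinity> \<le> \<bar>w j\<bar>}"
      proof -
        have "i \<in> {j\<in>{1..p}. \<infinity> \<le> \<bar>w j\<bar>}" using i wi by simp
        then have "{j\<in>{1..p}. \<infinity> \<le> \<bar>w j\<bar>} \<noteq> {}" by blast
        then show ?thesis by (simp add: Suc_le_eq card_gt_0_iff)
      qed
      then have "\<infinity> \<le> ord_abs p w 1"
        using ord_abs_char[of 1 p "\<lambda>x. \<infinity> \<le> x" w] r by auto
      then show ?thesis by simp
    qed
    have "(\<Sum>l=j..r. ord_abs p w l) = ord_abs p w 1 + (\<Sum>l=2..r. ord_abs p w l)"
      using True r by (simp add: sum.atLeast_Suc_atMost numeral_2_eq_2)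
    also have "\<dots> = \<infinity>" using w1
      by (simp add: sum_nonneg)
    finally show ?thesis by (simp add: sum_ereal)
  next
    case False
    then have j2: "2 \<le> j" "j \<le> r" using j by auto
    have "(\<Sum>l=j..r. ereal (lam l - \<gamma>)) = ereal ((\<Sum>l=j..r. lam l) - (\<Sum>l=j..r. \<gamma>))"
      by (simp add: sum_ereal sum_subtractf)
    also have "\<dots> < ereal ((\<Sum>l=j..r. t l) - (\<Sum>l=j..r. \<gamma>))"
      using H1[of j] j by simp
    also have "\<dots> = (\<Sum>l=j..r. ereal (t l - \<gamma>))"
      by (simp add: sum_ereal sum_subtractf)
    also have "\<dots> \<le> (\<Sum>l=j..r. ord_abs p w l)"
      by (rule sum_mono) (use low r j2 in auto)
    finally show ?thesis .
  qed
  have C2: "(\<Sum>l=r+1..j. ereal (lam l + \<gamma>)) \<ge> (\<Sum>l=r+1..j. ord_abs p w l)" if j: "j \<in> {r+1..p}" for j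
  proof -
    have "(\<Sum>l=r+1..j. ord_abs p w l) \<le> (\<Sum>l=r+1..j. ereal (t l + \<gamma>))"
      by (rule sum_mono) (use up j in auto)
    also have "\<dots> = ereal ((\<Sum>l=r+1..j. t l) + (\<Sum>l=r+1..j. \<gamma>))"
      by (simp add: sum_ereal sum.distrib)
    also have "\<dots> \<le> ereal ((\<Sum>l=r+1..j. lam l) + (\<Sum>l=r+1..j. \<gamma>))"
      using H2[OF j] by simp
    also have "\<dots> = (\<Sum>l=r+1..j. ereal (lam l + \<gamma>))"
      by (simp add: sum_ereal sum.distrib)
    finally show ?thesis .
  qed
  show ?thesis unfolding H_gamma_def w_def[symmetric] using C1 C2 by blast
qed

end
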